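(* Let \(X\) be a nonempty set, let \(\Phi\) be a mapping with domain \(X^{2}\), and let \(a_0 \in \Phi(X^{2})\). Then \(\Phi\) is \(a_0\)-coherent if and only if the fiber \(R := \Phi^{-1}(a_0)\) is an equivalence relation on \(X\) and the partition \(P_R \otimes P_R^1\) of \(X^{2}\) is a refinement of the partition \(P_{\Phi^{-1}} := \{\Phi^{-1}(b) \colon b \in \Phi(X^{2})\}\) of \(X^2\).
   Context: \(\Phi(X^2)\) is the range of \(\Phi\) and \(\Phi^{-1}(b)=\{\langle x,y\rangle\in X^2:\Phi(x,y)=b\}\). \(\Phi\) is strongly consistent with an equivalence relation \(R\) on \(X\) if \(\langle x_1,x_2\rangle\in R\) and \(\langle x_3,x_4\rangle\in R\) imply \(\Phi(x_1,x_3)=\Phi(x_2,x_4)\); \(\Phi\) is \(a_0\)-coherent if \(\Phi^{-1}(a_0)\) is an equivalence relation on \(X\) and \(\Phi\) is strongly consistent with it. For an equivalence relation \(R\) on \(X\), \(P_R=\{X_j: j\in J\}\) is the partition of \(X\) into the (distinct) equivalence classes of \(R\), and \(P_R\otimes P_R^1\) is the partition of \(X^2\) whose blocks are the set \(\bigcup_{j\in J}X_j^2\) together with all sets \(X_{j_1}\times X_{j_2}\) for distinct \(j_1,j_2\in J\). A partition \(P_1\) of a set is a refinement of a partition \(P_2\) of the same set if every block of \(P_1\) is contained in some block of \(P_2\). *)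

theory Defs
  imports Main
begin

text \<open>A mapping with domain X^2 is modelled as Phi :: 'a * 'a => 'b; only its values on X \<times> X matter.\<close>

definition fiber :: "'a set \<Rightarrow> ('a \<times> 'a \<Rightarrow> 'b) \<Rightarrow> 'b \<Rightarrow> ('a \<times> 'a) set" where
  "fiber X Phi b = {p \<in> X \<times> X. Phi p = b}"

definition strongly_consistent :: "'a set \<Rightarrow> ('a \<times> 'a \<Rightarrow> 'b) \<Rightarrow> ('a \<times> 'a) set \<Rightarrow> bool" where
  "strongly_consistent X Phi R \<longleftrightarrow>
     (\<forall>x1 x2 x3 x4. (x1, x2) \<in> R \<longrightarrow> (x3, x4) \<in> R \<longrightarrow> Phi (x1, x3) = Phi (x2, x4))"

definition coherent :: "'a set \<Rightarrow> ('a \<times> 'a \<Rightarrow> 'b) \<Rightarrow> 'b \<Rightarrow> bool" where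
  "coherent X Phi a0 \<longleftrightarrow> equiv X (fiber X Phi a0) \<and> strongly_consistent X Phi (fiber X Phi a0)"

text \<open>The partition P_R (x) P_R^1 of X^2: the union of all squares of classes, together with
  all products of two distinct classes.\<close>
definition prod_partition :: "'a set \<Rightarrow> ('a \<times> 'a) set \<Rightarrow> ('a \<times> 'a) set set" where
  "prod_partition X R =
     {\<Union>C\<in>X // R. C \<times> C} \<union> {C1 \<times> C2 | C1 C2. C1 \<in> X // R \<and> C2 \<in> X // R \<and> C1 \<noteq> C2}"

definition fiber_partition :: "'a set \<Rightarrow> ('a \<times> 'a \<Rightarrow> 'b) \<Rightarrow> ('a \<times> 'a) set set" where
  "fiber_partition X Phi = {fiber X Phi b | b. b \<in> Phi ` (X \<times> X)}"

definition refines :: "'c set set \<Rightarrow> 'c set set \<Rightarrow> bool" where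
  "refines P1 P2 \<longleftrightarrow> (\<forall>B\<in>P1. \<exists>C\<in>P2. B \<subseteq> C)"

end

theory Submission
  imports Defs
begin

theorem theorem2p10:
  fixes X :: "'a set" and Phi :: "'a \<times> 'a \<Rightarrow> 'b" and a0 :: 'b
  assumes "X \<noteq> {}"
    and "a0 \<in> Phi ` (X \<times> X)"
  shows "coherent X Phi a0 \<longleftrightarrow>
           (equiv X (fiber X Phi a0) \<and>
            refines (prod_partition X (fiber X Phi a0)) (fiber_partition X Phi))"
proof
  let ?R = "fiber X Phi a0"
  assume c: "coherent X Phi a0"
  hence eq: "equiv X ?R" and sc: "strongly_consistent X Phi ?R"
    unfolding coherent_def by auto
  have R: "?R \<subseteq> X \<times> X" "sym ?R" "trans ?R"
    using eq unfolding equiv_def refl_on_def by auto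
  have "refines (prod_partition X ?R) (fiber_partition X Phi)"
    unfolding refines_def
  proof
    fix B assume "B \<in> prod_partition X ?R"
    then consider "B = (\<Union>C\<in>X // ?R. C \<times> C)"
      | C1 C2 where "B = C1 \<times> C2" "C1 \<in> X // ?R" "C2 \<in> X // ?R"
      unfolding prod_partition_def by blast
    then show "\<exists>C\<in>fiber_partition X Phi. B \<subseteq> C"
    proof cases
      case 1
      have "B \<subseteq> ?R"
      proof
        fix p assume "p \<in> B"
        then obtain x y z where "p = (y,z)" "(x,y) \<in> ?R" "(x,z) \<in> ?R"
          using 1 unfolding quotient_def by auto
        thus "p \<in> ?R" using R(2,3) by (meson symD transD)
      qed
      moreover have "?R \<in> fiber_partition X Phi"
        using assms(2) unfolding fiber_partition_def by blast
      ultimately show ?thesis by blast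
    next
      case 2
      then obtain x1 x2 where x: "x1 \<in> X" "x2 \<in> X" "C1 = ?R``{x1}" "C2 = ?R``{x2}"
        unfolding quotient_def by blast
      have "B \<subseteq> fiber X Phi (Phi (x1,x2))"
      proof
        fix p assume "p \<in> B"
        then obtain y z where p: "p = (y,z)" "(x1,y) \<in> ?R" "(x2,z) \<in> ?R"
          using 2 x by auto
        hence "Phi (x1,x2) = Phi (y,z)" using sc unfolding strongly_consistent_def by blast
        moreover have "y \<in> X" "z \<in> X" using p R(1) by auto
        ultimately show "p \<in> fiber X Phi (Phi (x1,x2))" using p unfolding fiber_def by auto
      qed
      moreover have "fiber X Phi (Phi (x1,x2)) \<in> fiber_partition X Phi"
        using x unfolding fiber_partition_def by blast
      ultimately show ?thesis by blast
    qed
  qed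
  with eq show "equiv X ?R \<and> refines (prod_partition X ?R) (fiber_partition X Phi)" by blast
next
  let ?R = "fiber X Phi a0"
  assume h: "equiv X ?R \<and> refines (prod_partition X ?R) (fiber_partition X Phi)"
  hence eq: "equiv X ?R" and rf: "refines (prod_partition X ?R) (fiber_partition X Phi)" by auto
  have R: "?R \<subseteq> X \<times> X" "sym ?R" "trans ?R"
    using eq unfolding equiv_def refl_on_def by auto
  have "strongly_consistent X Phi ?R"
    unfolding strongly_consistent_def
  proof (intro allI impI)
    fix x1 x2 x3 x4 assume a: "(x1, x2) \<in> ?R" "(x3, x4) \<in> ?R"
    have X: "x1 \<in> X" "x2 \<in> X" "x3 \<in> X" "x4 \<in> X" using a R(1) by auto
    show "Phi (x1, x3) = Phi (x2, x4)"
    proof (cases "(x1,x3) \<in> ?R")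
      case True
      have "(x2,x1) \<in> ?R" using a R(2) by (meson symD)
      hence "(x2,x4) \<in> ?R" using True a R(3) by (meson transD)
      thus ?thesis using True unfolding fiber_def by auto
    next
      case False
      let ?C1 = "?R``{x1}" and ?C2 = "?R``{x3}"
      have q: "?C1 \<in> X // ?R" "?C2 \<in> X // ?R" using X unfolding quotient_def by auto
      have "x3 \<in> ?C2" using X eq unfolding equiv_def refl_on_def by auto
      hence ne: "?C1 \<noteq> ?C2" using False by auto
      have "?C1 \<times> ?C2 \<in> prod_partition X ?R"
        unfolding prod_partition_def using q ne by blast
      then obtain F where F: "F \<in> fiber_partition X Phi" "?C1 \<times> ?C2 \<subseteq> F"
        using rf unfolding refines_def by blast
      then obtain b where b: "F = fiber X Phi b" unfolding fiber_partition_def by blast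
      have "x1 \<in> ?C1" using X eq unfolding equiv_def refl_on_def by auto
      hence "(x1,x3) \<in> F" "(x2,x4) \<in> F" using F `x3 \<in> ?C2` a by auto
      thus ?thesis using b unfolding fiber_def by auto
    qed
  qed
  with eq show "coherent X Phi a0" unfolding coherent_def by blast
qed

end
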